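(* On the classical Robba ring $\mathcal R(\mathbb Z_p,K)$ the nice topology coincides with the inductive limit topology.
   Context: $p$ is an odd prime, $K$ a complete discretely valued field with $\mathbb Q_p\subseteq K\subseteq\mathbb C_p$, $o_K$ its ring of integers. The classical Robba ring $\mathcal R(\mathbb Z_p,K)$ is the ring of Laurent series $\sum_{n\in\mathbb Z}a_nT^n$ ($a_n\in K$) converging on some annulus $r\le|T|<1$, i.e. with $|a_n|\rho^n\to0$ as $|n|\to\infty$ for all $\rho\in[r,1)$; here $T=\gamma-1$ for the generator $\gamma$ of $\mathbb Z_p$ (it is the case $G=\mathbb Z_p$, $d=1$, $b_1=T$ of the generalized Robba ring). For $r\le\rho<\rho'<1$ put $\|x\|_{\rho,\rho'}=\max(\sup_n|a_n|\rho^n,\sup_n|a_n|\rho'^n)$; $D_{[r,1)}(\mathbb Z_p,K)$ denotes the Fréchet space of series converging on $r\le|T|<1$ with the topology given by these norms, and the inductive limit topology on $\mathcal R(\mathbb Z_p,K)=\varinjlim_{r\to1}D_{[r,1)}(\mathbb Z_p,K)$ is the locally convex inductive limit topology. Nice topology: for $x_0=\sum_nc_{0,n}T^n$ let $L_{x_0}=\{\sum_nd_nT^n\in\mathcal R(\mathbb Z_p,K):|c_{0,-n}||d_n|\le1\ \forall n\}$; the nice topology is the locally convex topology in which an $o_K$-lattice is open iff it contains some $L_{x_0}$. *)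

theory Defs
  imports Complex_Main "HOL-Computational_Algebra.Primes"
begin

text \<open>A complete discretely valued field K containing Q_p, given abstractly by an
absolute value v on a field of characteristic 0 with v(p) = 1/p.\<close>

definition cdv_field_over_Qp :: "nat \<Rightarrow> ('k::field_char_0 \<Rightarrow> real) \<Rightarrow> bool" where
  "cdv_field_over_Qp p v \<longleftrightarrow>
     (\<forall>x. 0 \<le> v x) \<and> (\<forall>x. v x = 0 \<longleftrightarrow> x = 0) \<and>
     (\<forall>x y. v (x * y) = v x * v y) \<and>
     (\<forall>x y. v (x + y) \<le> max (v x) (v y)) \<and>
     v (of_nat p) = 1 / real p \<and>
     (\<exists>\<pi>. 0 < v \<pi> \<and> v \<pi> < 1 \<and> (\<forall>x. x \<noteq> 0 \<longrightarrow> (\<exists>k::int. v x = v \<pi> powi k))) \<and>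
     (\<forall>f::nat \<Rightarrow> 'k. (\<forall>\<epsilon>>0. \<exists>N. \<forall>m\<ge>N. \<forall>n\<ge>N. v (f m - f n) < \<epsilon>) \<longrightarrow>
        (\<exists>l. \<forall>\<epsilon>>0. \<exists>N. \<forall>n\<ge>N. v (f n - l) < \<epsilon>))"

text \<open>Laurent series (coefficients indexed by int) converging on r \<le> |T| < 1.\<close>
definition D_ann :: "('k \<Rightarrow> real) \<Rightarrow> real \<Rightarrow> (int \<Rightarrow> 'k) set" where
  "D_ann v r = {a. \<forall>\<rho>. r \<le> \<rho> \<and> \<rho> < 1 \<longrightarrow>
        ((\<lambda>n. v (a n) * \<rho> powi n) \<longlongrightarrow> 0) cofinite}"

definition Robba :: "('k \<Rightarrow> real) \<Rightarrow> (int \<Rightarrow> 'k) set" where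
  "Robba v = (\<Union>r\<in>{0<..<1}. D_ann v r)"

definition rnorm :: "('k \<Rightarrow> real) \<Rightarrow> real \<Rightarrow> real \<Rightarrow> (int \<Rightarrow> 'k) \<Rightarrow> real" where
  "rnorm v \<rho> \<rho>' a = max (SUP n. v (a n) * \<rho> powi n) (SUP n. v (a n) * \<rho>' powi n)"

definition nbhd0_D :: "('k \<Rightarrow> real) \<Rightarrow> real \<Rightarrow> (int \<Rightarrow> 'k) set \<Rightarrow> bool" where
  "nbhd0_D v r S \<longleftrightarrow> S \<subseteq> D_ann v r \<and>
     (\<exists>F \<epsilon>. finite F \<and> (\<forall>(\<rho>, \<rho>')\<in>F. r \<le> \<rho> \<and> \<rho> < \<rho>' \<and> \<rho>' < 1) \<and> 0 < \<epsilon> \<and>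
        {a \<in> D_ann v r. \<forall>(\<rho>, \<rho>')\<in>F. rnorm v \<rho> \<rho>' a < \<epsilon>} \<subseteq> S)"

definition oK_submodule :: "('k::field \<Rightarrow> real) \<Rightarrow> (int \<Rightarrow> 'k) set \<Rightarrow> bool" where
  "oK_submodule v L \<longleftrightarrow> L \<subseteq> Robba v \<and> (\<lambda>n. 0) \<in> L \<and>
     (\<forall>a\<in>L. \<forall>b\<in>L. (\<lambda>n. a n + b n) \<in> L) \<and>
     (\<forall>c a. v c \<le> 1 \<and> a \<in> L \<longrightarrow> (\<lambda>n. c * a n) \<in> L)"

definition translate :: "(int \<Rightarrow> 'k::plus) \<Rightarrow> (int \<Rightarrow> 'k) set \<Rightarrow> (int \<Rightarrow> 'k) set" where
  "translate x L = (\<lambda>l n. x n + l n) ` L"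

definition L_nice :: "('k \<Rightarrow> real) \<Rightarrow> (int \<Rightarrow> 'k) \<Rightarrow> (int \<Rightarrow> 'k) set" where
  "L_nice v x0 = {d \<in> Robba v. \<forall>n. v (x0 (- n)) * v (d n) \<le> 1}"

definition nice_open :: "('k::field \<Rightarrow> real) \<Rightarrow> (int \<Rightarrow> 'k) set \<Rightarrow> bool" where
  "nice_open v U \<longleftrightarrow> U \<subseteq> Robba v \<and>
     (\<forall>x\<in>U. \<exists>L. oK_submodule v L \<and> (\<exists>x0\<in>Robba v. L_nice v x0 \<subseteq> L) \<and> translate x L \<subseteq> U)"

definition indlim_open :: "('k::field \<Rightarrow> real) \<Rightarrow> (int \<Rightarrow> 'k) set \<Rightarrow> bool" where
  "indlim_open v U \<longleftrightarrow> U \<subseteq> Robba v \<and>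
     (\<forall>x\<in>U. \<exists>L. oK_submodule v L \<and> (\<forall>r\<in>{0<..<1}. nbhd0_D v r (L \<inter> D_ann v r)) \<and>
        translate x L \<subseteq> U)"

end

theory Submission
  imports Defs
begin

definition absv :: "('k::field \<Rightarrow> real) \<Rightarrow> bool" where
  "absv v \<longleftrightarrow> (\<forall>x. 0 \<le> v x) \<and> (\<forall>x. v x = 0 \<longleftrightarrow> x = 0) \<and> (\<forall>x y. v (x * y) = v x * v y)"

lemma absv_nonneg: "absv v \<Longrightarrow> 0 \<le> v x" by (simp add: absv_def)
lemma absv_0[simp]: "absv v \<Longrightarrow> v 0 = 0" by (simp add: absv_def)
lemma absv_eq0: "absv v \<Longrightarrow> v x = 0 \<longleftrightarrow> x = 0" by (simp add: absv_def)
lemma absv_mult: "absv v \<Longrightarrow> v (x * y) = v x * v y" by (simp add: absv_def)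
lemma absv_1: "absv v \<Longrightarrow> v 1 = 1"
proof -
  assume a: "absv v"
  have "v 1 = v 1 * v 1" using absv_mult[OF a, of 1 1] by simp
  moreover have "v 1 \<noteq> 0" using absv_eq0[OF a, of 1] by simp
  ultimately show ?thesis by (metis mult_cancel_right1)
qed
lemma absv_inverse: "absv v \<Longrightarrow> v (inverse x) = inverse (v x)"
proof (cases "x = 0")
  case True assume "absv v" then show ?thesis using True by simp
next
  case False assume a: "absv v"
  have "v x * v (inverse x) = 1" using absv_mult[OF a, of x "inverse x"] absv_1[OF a] False by simp
  then show ?thesis by (metis inverse_unique mult.commute)
qed
lemma absv_power: "absv v \<Longrightarrow> v (x ^ n) = v x ^ n"
  by (induction n) (simp_all add: absv_1 absv_mult)
lemma absv_powi: "absv v \<Longrightarrow> v (x powi k) = v x powi k"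
  by (simp add: power_int_def absv_power absv_inverse)

lemma exists_val:
  fixes v :: "'k::field_char_0 \<Rightarrow> real"
  assumes a: "absv v" and vp: "v (of_nat p) = 1 / real p" and p: "p > 1" and T: "T > 0"
  shows "\<exists>c. T \<le> v c \<and> v c \<le> real p * T"
proof -
  define k where "k = \<lceil>log (real p) T\<rceil>"
  define c where "c = (of_nat p :: 'k) powi (- k)"
  have vc: "v c = real p powi k"
    using absv_powi[OF a, of "of_nat p" "-k"] vp p by (simp add: c_def power_int_minus power_int_inverse[symmetric])
  have pk: "real p powi k = real p powr real_of_int k" using p by (simp add: powr_real_of_int')
  have "T = real p powr log (real p) T" using p T by simp
  also have "\<dots> \<le> real p powr real_of_int k" using p by (intro powr_mono) (auto simp: k_def)
  finally have 1: "T \<le> v c" using vc pk by simp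
  have "real p powr real_of_int k \<le> real p powr (log (real p) T + 1)"
    using p by (intro powr_mono) (auto simp: k_def)
  also have "\<dots> = real p * T" using p T by (simp add: powr_add)
  finally have 2: "v c \<le> real p * T" using vc pk by simp
  show ?thesis using 1 2 by blast
qed
lemma cofinite_bounded:
  fixes f :: "'a \<Rightarrow> real"
  assumes "(f \<longlongrightarrow> 0) cofinite" "\<And>n. 0 \<le> f n"
  shows "\<exists>C>0. \<forall>n. f n \<le> C"
proof -
  have "eventually (\<lambda>n. f n < 1) cofinite" using order_tendstoD(2)[OF assms(1)] by simp
  then have fin: "finite {n. \<not> f n < 1}" by (simp add: eventually_cofinite)
  define C where "C = 1 + sum f {n. \<not> f n < 1}"
  have "sum f {n. \<not> f n < 1} \<ge> 0" by (simp add: assms(2) sum_nonneg)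
  then have C: "C > 0" by (simp add: C_def)
  have "f n \<le> C" for n
  proof (cases "f n < 1")
    case True then show ?thesis using \<open>sum f {n. \<not> f n < 1} \<ge> 0\<close> by (simp add: C_def)
  next
    case False
    then have "f n \<le> sum f {n. \<not> f n < 1}" using fin assms(2) by (intro member_le_sum) auto
    then show ?thesis by (simp add: C_def)
  qed
  then show ?thesis using C by blast
qed

lemma int_cofinite_tendsto:
  fixes f :: "int \<Rightarrow> real"
  assumes a: "(\<lambda>m::nat. f (int m)) \<longlonglongrightarrow> 0" and b: "(\<lambda>m::nat. f (- int m)) \<longlonglongrightarrow> 0"
  shows "(f \<longlongrightarrow> 0) cofinite"
proof (rule tendstoI)
  fix e :: real assume e: "e > 0"
  obtain N1 where N1: "\<forall>m\<ge>N1. dist (f (int m)) 0 < e" using tendstoD[OF a e] by (auto simp: eventually_sequentially)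
  obtain N2 where N2: "\<forall>m\<ge>N2. dist (f (- int m)) 0 < e" using tendstoD[OF b e] by (auto simp: eventually_sequentially)
  have "{x. \<not> dist (f x) 0 < e} \<subseteq> int ` {..<N1} \<union> (\<lambda>m. - int m) ` {..<N2}"
  proof
    fix x assume x: "x \<in> {x. \<not> dist (f x) 0 < e}"
    show "x \<in> int ` {..<N1} \<union> (\<lambda>m. - int m) ` {..<N2}"
    proof (cases "x \<ge> 0")
      case True
      then have "x = int (nat x)" by simp
      moreover have "nat x < N1" using N1 x True by (metis mem_Collect_eq not_le int_nat_eq)
      ultimately show ?thesis by blast
    next
      case False
      then have "x = - int (nat (-x))" by simp
      moreover have "nat (-x) < N2" using N2 x False by (metis \<open>x = - int (nat (-x))\<close> mem_Collect_eq not_le)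
      ultimately show ?thesis by blast
    qed
  qed
  then have "finite {x. \<not> dist (f x) 0 < e}" by (rule finite_subset) auto
  then show "eventually (\<lambda>x. dist (f x) 0 < e) cofinite" by (simp add: eventually_cofinite)
qed


lemma D_ann_tendsto: "a \<in> D_ann v r \<Longrightarrow> r \<le> \<rho> \<Longrightarrow> \<rho> < 1 \<Longrightarrow> ((\<lambda>n. v (a n) * \<rho> powi n) \<longlongrightarrow> 0) cofinite"
  by (simp add: D_ann_def)

lemma D_ann_bounded:
  assumes "absv v" "a \<in> D_ann v r" "r \<le> \<rho>" "\<rho> < 1" "0 < \<rho>"
  shows "\<exists>C>0. \<forall>n. v (a n) * \<rho> powi n \<le> C"
  using cofinite_bounded[OF D_ann_tendsto[OF assms(2-4)]] assms(1,5)
  by (simp add: absv_nonneg)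

lemma partA:
  assumes a: "absv v" and x0: "x0 \<in> Robba v" and L: "L_nice v x0 \<subseteq> L" and r: "r \<in> {0<..<1}"
  shows "nbhd0_D v r (L \<inter> D_ann v r)"
proof -
  obtain s where s: "s \<in> {0<..<1}" "x0 \<in> D_ann v s" using x0 by (auto simp: Robba_def)
  define \<rho> where "\<rho> = max r s"
  define \<rho>' where "\<rho>' = (\<rho> + 1) / 2"
  have \<rho>: "r \<le> \<rho>" "s \<le> \<rho>" "\<rho> < 1" "0 < \<rho>" "\<rho> < \<rho>'" "\<rho>' < 1" using r s by (auto simp: \<rho>_def \<rho>'_def)
  obtain C where C: "C > 0" "\<And>n. v (x0 n) * \<rho> powi n \<le> C"
    using D_ann_bounded[OF a s(2) \<rho>(2,3,4)] by blast
  have "{b \<in> D_ann v r. \<forall>(t, t')\<in>{(\<rho>, \<rho>')}. rnorm v t t' b < 1 / C} \<subseteq> L \<inter> D_ann v r"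
  proof
    fix b assume b: "b \<in> {b \<in> D_ann v r. \<forall>(t, t')\<in>{(\<rho>, \<rho>')}. rnorm v t t' b < 1 / C}"
    then have bD: "b \<in> D_ann v r" and bn: "rnorm v \<rho> \<rho>' b < 1 / C" by auto
    obtain B where B: "\<And>n. v (b n) * \<rho> powi n \<le> B" using D_ann_bounded[OF a bD \<rho>(1,3,4)] by blast
    have bdd: "bdd_above (range (\<lambda>n. v (b n) * \<rho> powi n))" using B by (intro bdd_aboveI[of _ B]) auto
    have tb: "v (b n) * \<rho> powi n < 1 / C" for n
    proof -
      have "v (b n) * \<rho> powi n \<le> (SUP n. v (b n) * \<rho> powi n)" by (rule cSUP_upper[OF _ bdd]) simp
      also have "\<dots> \<le> rnorm v \<rho> \<rho>' b" by (simp add: rnorm_def)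
      finally show ?thesis using bn by simp
    qed
    have "v (x0 (- n)) * v (b n) \<le> 1" for n
    proof -
      have e: "\<rho> powi (- n) * \<rho> powi n = 1" using \<rho>(4) by (simp add: power_int_minus)
      have "v (x0 (- n)) * v (b n) = (v (x0 (- n)) * \<rho> powi (- n)) * (v (b n) * \<rho> powi n)"
        using e by (metis (no_types, lifting) mult.assoc mult.left_commute mult_1_right)
      also have "\<dots> \<le> C * (1 / C)"
        using C C(2)[of "-n"] tb[of n] a \<rho>(4)
        by (intro mult_mono) (auto simp: absv_nonneg)
      also have "\<dots> = 1" using C by simp
      finally show ?thesis .
    qed
    moreover have "b \<in> Robba v" using bD r by (auto simp: Robba_def)
    ultimately have "b \<in> L_nice v x0" by (simp add: L_nice_def)
    then show "b \<in> L \<inter> D_ann v r" using L bD by auto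
  qed
  then show ?thesis unfolding nbhd0_D_def using \<rho> C
    by (intro conjI exI[of _ "{(\<rho>, \<rho>')}"] exI[of _ "1 / C"]) auto
qed


lemma weight_le:
  fixes t r R :: real
  assumes "0 < r" "r \<le> t" "t \<le> R"
  shows "t powi n \<le> (if 0 \<le> n then R else r) powi n"
proof (cases "0 \<le> n")
  case True then show ?thesis using assms by (simp add: power_int_mono)
next
  case False then show ?thesis using assms by (simp add: power_int_antimono)
qed

lemma ball_lemma:
  assumes a: "absv v" and N: "nbhd0_D v r (L \<inter> D_ann v r)" and r: "r \<in> {0<..<1}"
  shows "\<exists>\<epsilon> R. \<epsilon> > 0 \<and> r \<le> R \<and> R < 1 \<and>
     (\<forall>b\<in>D_ann v r. (\<forall>n. v (b n) * (if 0 \<le> n then R else r) powi n \<le> \<epsilon>) \<longrightarrow> b \<in> L)"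
proof -
  obtain F \<epsilon> where F: "finite F" "\<forall>(t, t')\<in>F. r \<le> t \<and> t < t' \<and> t' < 1" "0 < \<epsilon>"
    "{b \<in> D_ann v r. \<forall>(t, t')\<in>F. rnorm v t t' b < \<epsilon>} \<subseteq> L \<inter> D_ann v r"
    using N unfolding nbhd0_D_def by blast
  define R where "R = Max (insert r (snd ` F))"
  have fin: "finite (insert r (snd ` F))" using F(1) by simp
  have R1: "r \<le> R" unfolding R_def using fin by (intro Max_ge) auto
  have R2: "R < 1" unfolding R_def using fin F(2) r by (subst Max_less_iff) auto
  have R3: "t' \<le> R" if "(t, t') \<in> F" for t t' unfolding R_def using fin that by (intro Max_ge) force+
  let ?W = "\<lambda>n. (if 0 \<le> n then R else r) powi n"
  have main: "b \<in> L" if b: "b \<in> D_ann v r" "\<forall>n. v (b n) * ?W n \<le> \<epsilon> / 2" for b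
  proof -
    have sup: "(SUP n. v (b n) * t powi n) \<le> \<epsilon> / 2" if "r \<le> t" "t \<le> R" for t
    proof (rule cSUP_least)
      fix n
      have "v (b n) * t powi n \<le> v (b n) * ?W n"
        using weight_le[of r t R n] that r a by (intro mult_left_mono) (auto simp: absv_nonneg)
      then show "v (b n) * t powi n \<le> \<epsilon> / 2" using b(2) by (meson order_trans)
    qed simp
    have "\<forall>(t, t')\<in>F. rnorm v t t' b < \<epsilon>"
    proof (clarify)
      fix t t' assume tt: "(t, t') \<in> F"
      then have "r \<le> t" "t \<le> R" "r \<le> t'" "t' \<le> R" using F(2) R3[OF tt] by auto
      then have "rnorm v t t' b \<le> \<epsilon> / 2" using sup[of t] sup[of t'] unfolding rnorm_def by (simp only: max.bounded_iff)
      then show "rnorm v t t' b < \<epsilon>" using F(3) by simp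
    qed
    then show ?thesis using F(4) b(1) by auto
  qed
  show ?thesis using F(3) R1 R2 main by (intro exI[of _ "\<epsilon> / 2"] exI[of _ R]) auto
qed


definition rr :: "nat \<Rightarrow> real" where "rr k = 1 - 1 / (real k + 2)"

lemma rr_pos: "0 < rr k" and rr_less1: "rr k < 1"
  by (auto simp: rr_def field_simps)

lemma rr_gt: assumes "\<rho> < (1::real)" shows "\<exists>k. \<rho> < rr k"
proof -
  obtain k where k: "1 / (1 - \<rho>) < real k" using reals_Archimedean2 by blast
  have pos: "0 < 1 - \<rho>" using assms by simp
  have "1 / (1 - \<rho>) < real k + 2" using k by simp
  then have "1 < (real k + 2) * (1 - \<rho>)" using pos by (simp add: field_simps)
  then have "1 / (real k + 2) < 1 - \<rho>" by (simp add: field_simps)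
  then show ?thesis by (intro exI[of _ k]) (auto simp: rr_def)
qed

lemma null_comp:
  fixes f g :: "'a \<Rightarrow> real"
  assumes "eventually (\<lambda>x. norm (f x) \<le> g x) F" "(g \<longlongrightarrow> 0) F"
  shows "(f \<longlongrightarrow> 0) F"
  by (rule tendsto_0_le[OF assms(2), of _ 1]) (rule eventually_mono[OF assms(1)], auto)

lemma D_ann_mono: "r \<le> r' \<Longrightarrow> D_ann v r \<subseteq> D_ann v r'"
  by (auto simp: D_ann_def)

lemma D_ann_dom:
  assumes a: "absv v" and r0: "0 < r" and d: "d \<in> D_ann v r" and b: "\<And>n. b n = d n \<or> b n = 0"
  shows "b \<in> D_ann v r"
  unfolding D_ann_def
proof (clarify)
  fix \<rho> assume \<rho>: "r \<le> \<rho>" "\<rho> < 1"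
  show "((\<lambda>n. v (b n) * \<rho> powi n) \<longlongrightarrow> 0) cofinite"
  proof (rule null_comp[OF _ D_ann_tendsto[OF d \<rho>]])
    show "\<forall>\<^sub>F n in cofinite. norm (v (b n) * \<rho> powi n) \<le> v (d n) * \<rho> powi n"
    proof (rule always_eventually, rule allI)
      fix n
      have "0 \<le> v (d n) * \<rho> powi n"
        using a r0 \<rho> by (auto simp: absv_nonneg)
      then show "norm (v (b n) * \<rho> powi n) \<le> v (d n) * \<rho> powi n"
        using b[of n] a by (auto simp: absv_nonneg)
    qed
  qed
qed


lemma D_ann_pos:
  assumes a: "absv v" and r0: "0 < r0" "r0 < 1" and d: "d \<in> D_ann v r0" and b: "\<And>n. b n = d n \<or> b n = 0"
    and bneg: "\<And>n. n < 0 \<Longrightarrow> b n = 0" and r': "0 < r'"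
  shows "b \<in> D_ann v r'"
  unfolding D_ann_def
proof (clarify)
  fix \<rho> assume \<rho>: "r' \<le> \<rho>" "\<rho> < 1"
  define \<sigma> where "\<sigma> = max \<rho> r0"
  have \<sigma>: "r0 \<le> \<sigma>" "\<sigma> < 1" "\<rho> \<le> \<sigma>" using \<rho> r0 by (auto simp: \<sigma>_def)
  show "((\<lambda>n. v (b n) * \<rho> powi n) \<longlongrightarrow> 0) cofinite"
  proof (rule null_comp[OF _ D_ann_tendsto[OF d \<sigma>(1,2)]])
    show "\<forall>\<^sub>F n in cofinite. norm (v (b n) * \<rho> powi n) \<le> v (d n) * \<sigma> powi n"
    proof (rule always_eventually, rule allI)
      fix n
      have sp: "0 < \<sigma>" using r0 \<sigma>(1) by linarith
      have nn: "0 \<le> v (d n) * \<sigma> powi n" using absv_nonneg[OF a] sp by (intro mult_nonneg_nonneg) simp_all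
      show "norm (v (b n) * \<rho> powi n) \<le> v (d n) * \<sigma> powi n"
      proof (cases "b n = 0")
        case True then show ?thesis using nn a by simp
      next
        case False
        have bd: "b n = d n" using False b[of n] by blast
        have n0: "0 \<le> n" using False bneg[of n] by linarith
        have rp: "0 \<le> \<rho>" using \<rho>(1) r' by linarith
        have "\<rho> powi n \<le> \<sigma> powi n" using n0 rp \<sigma>(3) by (intro power_int_mono) auto
        then have "v (d n) * \<rho> powi n \<le> v (d n) * \<sigma> powi n" using absv_nonneg[OF a] by (intro mult_left_mono) auto
        moreover have "norm (v (b n) * \<rho> powi n) = v (d n) * \<rho> powi n" using bd absv_nonneg[OF a, of "d n"] rp by simp
        ultimately show ?thesis by simp
      qed
    qed
  qed
qed

lemma mono_D:
  assumes a: "absv v"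
  shows "(\<lambda>n. if n = j then c else 0) \<in> D_ann v r"
  unfolding D_ann_def
proof (clarify)
  fix \<rho> :: real
  have "finite {n. \<not> v (if n = j then c else 0) * \<rho> powi n = 0}"
    by (rule finite_subset[of _ "{j}"]) (auto simp: a)
  then have "eventually (\<lambda>n. v (if n = j then c else 0) * \<rho> powi n = 0) cofinite"
    by (simp add: eventually_cofinite)
  then show "((\<lambda>n. v (if n = j then c else 0) * \<rho> powi n) \<longlongrightarrow> 0) cofinite"
    by (rule tendsto_eventually)
qed

lemma oK_add: "oK_submodule v L \<Longrightarrow> a \<in> L \<Longrightarrow> b \<in> L \<Longrightarrow> (\<lambda>n. a n + b n) \<in> L"
  unfolding oK_submodule_def by blast

lemma oK_zero: "oK_submodule v L \<Longrightarrow> (\<lambda>n. 0) \<in> L"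
  unfolding oK_submodule_def by blast

lemma fin_sum:
  assumes L: "oK_submodule v L" and S: "finite S"
    and m: "\<forall>j\<in>S. (\<lambda>n. if n = j then d n else 0) \<in> L"
  shows "(\<lambda>n. if n \<in> S then d n else 0) \<in> L"
  using S m
proof (induction S rule: finite_induct)
  case empty then show ?case using oK_zero[OF L] by simp
next
  case (insert j S)
  have 1: "(\<lambda>n. if n = j then d n else 0) \<in> L" using insert by simp
  have 2: "(\<lambda>n. if n \<in> S then d n else 0) \<in> L" using insert by simp
  have "(\<lambda>n. (if n = j then d n else 0) + (if n \<in> S then d n else 0)) \<in> L"
    by (rule oK_add[OF L 1 2])
  moreover have "(\<lambda>n. (if n = j then d n else 0) + (if n \<in> S then d n else 0)) = (\<lambda>n. if n \<in> insert j S then d n else 0)"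
    using insert(2) by (auto simp: fun_eq_iff)
  ultimately show ?case by simp
qed


lemma partB:
  fixes v :: "'k::field_char_0 \<Rightarrow> real"
  assumes a: "absv v" and vp: "v (of_nat p) = 1 / real p" and p: "p > 1"
    and L: "oK_submodule v L" and N: "\<forall>r\<in>{0<..<1}. nbhd0_D v r (L \<inter> D_ann v r)"
  shows "\<exists>x0\<in>Robba v. L_nice v x0 \<subseteq> L"
proof -
  let ?P = "\<lambda>k \<epsilon> R. \<epsilon> > 0 \<and> rr k \<le> R \<and> R < 1 \<and> (\<forall>b\<in>D_ann v (rr k).
     (\<forall>n. v (b n) * (if 0 \<le> n then R else rr k) powi n \<le> \<epsilon>) \<longrightarrow> b \<in> L)"
  have "\<forall>k. \<exists>eR. ?P k (fst eR) (snd eR)"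
  proof
    fix k
    have rk: "rr k \<in> {0<..<1}" using rr_pos rr_less1 by auto
    obtain \<epsilon> R where "?P k \<epsilon> R" using ball_lemma[OF a N[rule_format, OF rk] rk] by blast
    then show "\<exists>eR. ?P k (fst eR) (snd eR)" by (intro exI[of _ "(\<epsilon>, R)"]) simp
  qed
  from choice[OF this] obtain g where g: "\<forall>k. ?P k (fst (g k)) (snd (g k))" ..
  define eps where "eps = (\<lambda>k. fst (g k))"
  define RR where "RR = (\<lambda>k. snd (g k))"
  have gk: "?P k (eps k) (RR k)" for k using g by (simp add: eps_def RR_def)
  have eps: "eps k > 0" "rr k \<le> RR k" "RR k < 1" for k using gk[of k] by auto
  have ball: "b \<in> L" if "b \<in> D_ann v (rr k)" "\<forall>n. v (b n) * (if 0 \<le> n then RR k else rr k) powi n \<le> eps k" for b k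
    using gk[of k] that by auto
  define t where "t = (\<lambda>m::nat. MIN k\<in>{..m}. 1 / (eps k * rr k ^ m))"
  have t_le: "t m \<le> 1 / (eps k * rr k ^ m)" if "k \<le> m" for k m
    unfolding t_def using that by (intro Min_le) auto
  have t_in: "\<exists>k. t m = 1 / (eps k * rr k ^ m)" for m
  proof -
    have "t m \<in> (\<lambda>k. 1 / (eps k * rr k ^ m)) ` {..m}" unfolding t_def by (intro Min_in) auto
    then show ?thesis by blast
  qed
  have t_pos: "t m > 0" for m
  proof -
    obtain k where "t m = 1 / (eps k * rr k ^ m)" using t_in by blast
    then show ?thesis using eps(1)[of k] rr_pos[of k] by simp
  qed
  define T where "T = (\<lambda>j::int. if j \<le> 0 then RR 0 ^ nat (-j) / eps 0 else t (nat j))"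
  have RR0: "0 < RR 0" using eps(2)[of 0] rr_pos[of 0] by linarith
  have T_pos: "T j > 0" for j using t_pos RR0 eps(1)[of 0] by (simp add: T_def)
  define x0 where "x0 = (\<lambda>j. SOME c. T j \<le> v c \<and> v c \<le> real p * T j)"
  have x0: "T j \<le> v (x0 j) \<and> v (x0 j) \<le> real p * T j" for j
    unfolding x0_def by (rule someI_ex[OF exists_val[OF a vp p T_pos]])
  define s where "s = (1 + RR 0) / 2"
  have s: "0 < s" "s < 1" "RR 0 < s" using eps(3)[of 0] RR0 by (auto simp: s_def)
  have x0D: "x0 \<in> D_ann v s"
    unfolding D_ann_def
  proof (clarify)
    fix \<rho> :: real assume \<rho>: "s \<le> \<rho>" "\<rho> < 1"
    have \<rho>0: "0 < \<rho>" using \<rho> s by linarith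
    show "((\<lambda>n. v (x0 n) * \<rho> powi n) \<longlongrightarrow> 0) cofinite"
    proof (rule int_cofinite_tendsto)
      obtain k where k: "\<rho> < rr k" using rr_gt \<rho>(2) by blast
      have q: "0 \<le> \<rho> / rr k" "\<rho> / rr k < 1" using k \<rho>0 rr_pos[of k] by (auto simp: field_simps)
      show "(\<lambda>m. v (x0 (int m)) * \<rho> powi (int m)) \<longlonglongrightarrow> 0"
      proof (rule null_comp)
        show "(\<lambda>m. (real p / eps k) * (\<rho> / rr k) ^ m) \<longlonglongrightarrow> 0"
          using q by (intro tendsto_mult_right_zero LIMSEQ_power_zero) auto
        show "eventually (\<lambda>m. norm (v (x0 (int m)) * \<rho> powi int m) \<le> (real p / eps k) * (\<rho> / rr k) ^ m) sequentially"
        proof (rule eventually_sequentiallyI[of "Suc k"])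
          fix m assume m: "Suc k \<le> m"
          have Tm: "T (int m) = t m" using m by (simp add: T_def)
          have "norm (v (x0 (int m)) * \<rho> powi int m) = v (x0 (int m)) * \<rho> ^ m"
            using absv_nonneg[OF a, of "x0 (int m)"] \<rho>0 by simp
          also have "\<dots> \<le> real p * t m * \<rho> ^ m"
            using x0[of "int m"] Tm \<rho>0 by (intro mult_right_mono) auto
          also have "\<dots> \<le> real p * (1 / (eps k * rr k ^ m)) * \<rho> ^ m"
            using t_le[of k m] m \<rho>0 by (intro mult_right_mono mult_left_mono) auto
          also have "\<dots> = (real p / eps k) * (\<rho> / rr k) ^ m" by (simp add: power_divide)
          finally show "norm (v (x0 (int m)) * \<rho> powi int m) \<le> (real p / eps k) * (\<rho> / rr k) ^ m" .
        qed
      qed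
      have q2: "0 \<le> RR 0 / \<rho>" "RR 0 / \<rho> < 1" using s \<rho> \<rho>0 RR0 by (auto simp: field_simps)
      show "(\<lambda>m. v (x0 (- int m)) * \<rho> powi (- int m)) \<longlonglongrightarrow> 0"
      proof (rule null_comp)
        show "(\<lambda>m. (real p / eps 0) * (RR 0 / \<rho>) ^ m) \<longlonglongrightarrow> 0"
          using q2 by (intro tendsto_mult_right_zero LIMSEQ_power_zero) auto
        show "eventually (\<lambda>m. norm (v (x0 (- int m)) * \<rho> powi (- int m)) \<le> (real p / eps 0) * (RR 0 / \<rho>) ^ m) sequentially"
        proof (rule always_eventually, rule allI)
          fix m :: nat
          have Tm: "T (- int m) = RR 0 ^ m / eps 0" by (simp add: T_def)
          have "norm (v (x0 (- int m)) * \<rho> powi (- int m)) = v (x0 (- int m)) * inverse (\<rho> ^ m)"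
            using absv_nonneg[OF a, of "x0 (- int m)"] \<rho>0 by (simp add: power_int_minus)
          also have "\<dots> \<le> real p * (RR 0 ^ m / eps 0) * inverse (\<rho> ^ m)"
            using x0[of "- int m"] Tm \<rho>0 by (intro mult_right_mono) auto
          also have "\<dots> = (real p / eps 0) * (RR 0 / \<rho>) ^ m" by (simp add: power_divide field_simps)
          finally show "norm (v (x0 (- int m)) * \<rho> powi (- int m)) \<le> (real p / eps 0) * (RR 0 / \<rho>) ^ m" .
        qed
      qed
    qed
  qed
  have x0R: "x0 \<in> Robba v" using x0D s by (auto simp: Robba_def)
  have "L_nice v x0 \<subseteq> L"
  proof
    fix d assume dn: "d \<in> L_nice v x0"
    then have dR: "d \<in> Robba v" and nice: "\<And>n. v (x0 (-n)) * v (d n) \<le> 1" by (auto simp: L_nice_def)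
    obtain r0 where r0: "0 < r0" "r0 < 1" "d \<in> D_ann v r0" using dR by (auto simp: Robba_def)
    have vdT: "v (d n) * T (-n) \<le> 1" for n
    proof -
      have "v (d n) * T (-n) \<le> v (d n) * v (x0 (-n))"
        using x0[of "-n"] absv_nonneg[OF a, of "d n"] by (intro mult_left_mono) auto
      then show ?thesis using nice[of n] by (simp add: mult.commute)
    qed
    obtain k where k: "r0 < rr k" using rr_gt r0(2) by blast
    have dk: "d \<in> D_ann v (rr k)" using D_ann_mono[of r0 "rr k" v] k r0(3) by auto
    define E where "E = {n. \<not> v (d n) * rr k powi n \<le> eps k}"
    have "eventually (\<lambda>n. v (d n) * rr k powi n < eps k) cofinite"
      using order_tendstoD(2)[OF D_ann_tendsto[OF r0(3), of "rr k"] eps(1)[of k]] k rr_less1[of k] by simp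
    then have "finite {n. \<not> v (d n) * rr k powi n < eps k}" by (simp add: eventually_cofinite)
    then have Efin: "finite E" unfolding E_def by (rule finite_subset[rotated]) auto
    define dP where "dP = (\<lambda>n. if 0 \<le> n then d n else 0)"
    define dT where "dT = (\<lambda>n. if n < 0 \<and> n \<notin> E then d n else 0)"
    define dF where "dF = (\<lambda>n. if n \<in> {n \<in> E. n < 0} then d n else 0)"
    have dsum: "d = (\<lambda>n. (\<lambda>n. dP n + dT n) n + dF n)" by (auto simp: fun_eq_iff dP_def dT_def dF_def)
    have dPL: "dP \<in> L"
    proof (rule ball[of _ 0])
      show "dP \<in> D_ann v (rr 0)" by (rule D_ann_pos[OF a r0(1,2,3)]) (auto simp: dP_def rr_pos)
      show "\<forall>n. v (dP n) * (if 0 \<le> n then RR 0 else rr 0) powi n \<le> eps 0"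
      proof
        fix n :: int
        show "v (dP n) * (if 0 \<le> n then RR 0 else rr 0) powi n \<le> eps 0"
        proof (cases "0 \<le> n")
          case True
          have "T (-n) = RR 0 ^ nat n / eps 0" using True by (simp add: T_def)
          then have "v (d n) * (RR 0 ^ nat n / eps 0) \<le> 1" using vdT[of n] by simp
          then have "v (d n) * RR 0 ^ nat n \<le> eps 0" using eps(1)[of 0] by (simp add: field_simps)
          then show ?thesis using True by (simp add: dP_def power_int_nonneg_exp)
        next
          case False then show ?thesis using a eps(1)[of 0] by (simp add: dP_def)
        qed
      qed
    qed
    have dTL: "dT \<in> L"
    proof (rule ball[of _ k])
      show "dT \<in> D_ann v (rr k)" by (rule D_ann_dom[OF a rr_pos dk]) (auto simp: dT_def)
      show "\<forall>n. v (dT n) * (if 0 \<le> n then RR k else rr k) powi n \<le> eps k"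
      proof
        fix n :: int
        show "v (dT n) * (if 0 \<le> n then RR k else rr k) powi n \<le> eps k"
        proof (cases "n < 0 \<and> n \<notin> E")
          case True then show ?thesis by (simp add: dT_def E_def)
        next
          case False then show ?thesis using a eps(1)[of k] by (auto simp: dT_def)
        qed
      qed
    qed
    have dFL: "dF \<in> L" unfolding dF_def
    proof (rule fin_sum[OF L])
      show "finite {n \<in> E. n < 0}" using Efin by simp
      show "\<forall>j\<in>{n \<in> E. n < 0}. (\<lambda>n. if n = j then d n else 0) \<in> L"
      proof
        fix j assume "j \<in> {n \<in> E. n < 0}"
        then have j: "j < 0" by simp
        define m where "m = nat (-j)"
        have jm: "j = - int m" using j by (simp add: m_def)
        obtain k' where k': "t m = 1 / (eps k' * rr k' ^ m)" using t_in by blast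
        have Tj: "T (-j) = t m" using j by (simp add: T_def m_def)
        have "v (d j) * t m \<le> 1" using vdT[of j] Tj by simp
        then have vd: "v (d j) \<le> eps k' * rr k' ^ m" using k' eps(1)[of k'] rr_pos[of k'] by (simp add: field_simps)
        have fe: "(\<lambda>n. if n = j then d n else 0) = (\<lambda>n. if n = j then d j else 0)" by auto
        show "(\<lambda>n. if n = j then d n else 0) \<in> L"
        proof (rule ball[of _ k'])
          show "(\<lambda>n. if n = j then d n else 0) \<in> D_ann v (rr k')" unfolding fe by (rule mono_D[OF a])
          show "\<forall>n. v (if n = j then d n else 0) * (if 0 \<le> n then RR k' else rr k') powi n \<le> eps k'"
          proof
            fix n :: int
            show "v (if n = j then d n else 0) * (if 0 \<le> n then RR k' else rr k') powi n \<le> eps k'"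
            proof (cases "n = j")
              case True
              have "rr k' powi j = inverse (rr k' ^ m)" using jm by (simp add: power_int_minus)
              moreover have "v (d j) * inverse (rr k' ^ m) \<le> eps k'"
                using vd rr_pos[of k'] by (simp add: field_simps)
              ultimately show ?thesis using True j by simp
            next
              case False then show ?thesis using a eps(1)[of k'] by simp
            qed
          qed
        qed
      qed
    qed
    show "d \<in> L" using oK_add[OF L oK_add[OF L dPL dTL] dFL] dsum by simp
  qed
  then show ?thesis using x0R by blast
qed


lemma cdv_absv: "cdv_field_over_Qp p v \<Longrightarrow> absv v"
  unfolding cdv_field_over_Qp_def absv_def by blast

lemma cdv_vp: "cdv_field_over_Qp p v \<Longrightarrow> v (of_nat p) = 1 / real p"
  unfolding cdv_field_over_Qp_def by blast

theorem proposition5p13: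
  fixes p :: nat and v :: "'k::field_char_0 \<Rightarrow> real"
  assumes "prime p" and "odd p" and "cdv_field_over_Qp p v"
  shows "{U. nice_open v U} = {U. indlim_open v U}"
proof -
  have a: "absv v" using cdv_absv[OF assms(3)] .
  have vp: "v (of_nat p) = 1 / real p" using cdv_vp[OF assms(3)] .
  have p: "p > 1" using assms(1) prime_gt_1_nat by blast
  have "nice_open v U \<longleftrightarrow> indlim_open v U" for U
  proof
    assume U: "nice_open v U"
    show "indlim_open v U" unfolding indlim_open_def
    proof (intro conjI ballI)
      show "U \<subseteq> Robba v" using U by (simp add: nice_open_def)
      fix x assume x: "x \<in> U"
      then obtain L x0 where L: "oK_submodule v L" "x0 \<in> Robba v" "L_nice v x0 \<subseteq> L" "translate x L \<subseteq> U"
        using U unfolding nice_open_def by blast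
      have "\<forall>r\<in>{0<..<1}. nbhd0_D v r (L \<inter> D_ann v r)" using partA[OF a L(2,3)] by blast
      then show "\<exists>L. oK_submodule v L \<and> (\<forall>r\<in>{0<..<1}. nbhd0_D v r (L \<inter> D_ann v r)) \<and> translate x L \<subseteq> U"
        using L by blast
    qed
  next
    assume U: "indlim_open v U"
    show "nice_open v U" unfolding nice_open_def
    proof (intro conjI ballI)
      show "U \<subseteq> Robba v" using U by (simp add: indlim_open_def)
      fix x assume x: "x \<in> U"
      then obtain L where L: "oK_submodule v L" "\<forall>r\<in>{0<..<1}. nbhd0_D v r (L \<inter> D_ann v r)" "translate x L \<subseteq> U"
        using U unfolding indlim_open_def by blast
      have "\<exists>x0\<in>Robba v. L_nice v x0 \<subseteq> L" using partB[OF a vp p L(1,2)] .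
      then show "\<exists>L. oK_submodule v L \<and> (\<exists>x0\<in>Robba v. L_nice v x0 \<subseteq> L) \<and> translate x L \<subseteq> U"
        using L by blast
    qed
  qed
  then show ?thesis by blast
qed

end
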